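(* Let $k > d \geq 1$ and $1 < q \leq k$ be integers. There is a function $f = f_{k,d,q} : \mathbb{N} \to \mathbb{R}$ with $f(N) \to 0$ as $N \to \infty$ such that for every positive integer $n$ with $q \mid n-2$, setting $N = (k-1)n - k + 2$, there exists an $N$-vertex $k$-graph $H$ with $\delta_d(H) \geq (1/q - f(N)) \binom{N-d}{k-d}$ that does not contain the $k$-expansion of any $n$-vertex tree all of whose vertex degrees are congruent to $1$ modulo $q$.
   Context: A $k$-graph is a $k$-uniform hypergraph. For a $k$-graph $H$ and $S \subseteq V(H)$, $\deg_H(S)$ is the number of edges containing $S$, and $\delta_d(H)$ is the minimum of $\deg_H(S)$ over all $d$-subsets $S \subseteq V(H)$. The $k$-expansion $T^{(k)}$ of a graph $T$ is the $k$-graph obtained by replacing each edge $uv$ of $T$ by a $k$-edge consisting of $u$, $v$ and $k-2$ new vertices that belong to no other edge. "Contain" means as a (not necessarily induced) subgraph. *)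

theory Defs
  imports Complex_Main
begin

definition is_kgraph :: "nat \<Rightarrow> 'a set \<Rightarrow> 'a set set \<Rightarrow> bool" where
  "is_kgraph k V E \<longleftrightarrow> finite V \<and> (\<forall>e\<in>E. e \<subseteq> V \<and> card e = k)"

definition hdeg :: "'a set set \<Rightarrow> 'a set \<Rightarrow> nat" where
  "hdeg E S = card {e\<in>E. S \<subseteq> e}"

definition min_codegree :: "nat \<Rightarrow> 'a set \<Rightarrow> 'a set set \<Rightarrow> nat" where
  "min_codegree d V E = Min {hdeg E S | S. S \<subseteq> V \<and> card S = d}"

definition hcontains :: "'b set \<Rightarrow> 'b set set \<Rightarrow> 'a set \<Rightarrow> 'a set set \<Rightarrow> bool" where
  "hcontains VG EG VH EH \<longleftrightarrow>
     (\<exists>\<phi>. inj_on \<phi> VG \<and> \<phi> ` VG \<subseteq> VH \<and> (\<forall>e\<in>EG. \<phi> ` e \<in> EH))"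

definition is_graph :: "'a set \<Rightarrow> 'a set set \<Rightarrow> bool" where
  "is_graph V E \<longleftrightarrow> finite V \<and> (\<forall>e\<in>E. e \<subseteq> V \<and> card e = 2)"

definition adj :: "'a set set \<Rightarrow> 'a \<Rightarrow> 'a \<Rightarrow> bool" where
  "adj E u v \<longleftrightarrow> u \<noteq> v \<and> {u, v} \<in> E"

definition connected_graph :: "'a set \<Rightarrow> 'a set set \<Rightarrow> bool" where
  "connected_graph V E \<longleftrightarrow> (\<forall>u\<in>V. \<forall>v\<in>V. (u, v) \<in> {(x, y). adj E x y}\<^sup>*)"

definition is_cycle :: "'a set set \<Rightarrow> 'a list \<Rightarrow> bool" where
  "is_cycle E cs \<longleftrightarrow> length cs \<ge> 3 \<and> distinct cs \<and>
     (\<forall>i < length cs - 1. adj E (cs ! i) (cs ! Suc i)) \<and> adj E (last cs) (hd cs)"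

definition acyclic_graph :: "'a set set \<Rightarrow> bool" where
  "acyclic_graph E \<longleftrightarrow> \<not> (\<exists>cs. is_cycle E cs)"

definition is_tree :: "'a set \<Rightarrow> 'a set set \<Rightarrow> bool" where
  "is_tree V E \<longleftrightarrow> is_graph V E \<and> V \<noteq> {} \<and> connected_graph V E \<and> acyclic_graph E"

definition gdeg :: "'a set set \<Rightarrow> 'a \<Rightarrow> nat" where
  "gdeg E v = card {e\<in>E. v \<in> e}"

definition expansion_V :: "nat \<Rightarrow> 'a set \<Rightarrow> 'a set set \<Rightarrow> ('a + 'a set \<times> nat) set" where
  "expansion_V k V E = Inl ` V \<union> {Inr (e, i) | e i. e \<in> E \<and> i < k - 2}"

definition expansion_E :: "nat \<Rightarrow> 'a set set \<Rightarrow> ('a + 'a set \<times> nat) set set" where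
  "expansion_E k E = {Inl ` e \<union> {Inr (e, i) | i. i < k - 2} | e. e \<in> E}"

end

theory Submission
  imports Defs
begin

lemma conn_edges:
  assumes G: "is_graph V E" and ne: "V \<noteq> {}" and C: "connected_graph V E"
  shows "card V \<le> Suc (card E)"
proof -
  from ne obtain r where r: "r \<in> V" by auto
  define R where "R = {(x,y). adj E x y}"
  define dist where "dist v = (LEAST m. (r,v) \<in> R^^m)" for v
  have reach: "\<exists>m. (r,v) \<in> R^^m" if "v \<in> V" for v
    using C r that unfolding connected_graph_def R_def by (meson rtrancl_power)
  have step: "\<exists>u. adj E u v \<and> dist u < dist v" if vV: "v \<in> V" and vr: "v \<noteq> r" for v
  proof -
    obtain m where m: "(r,v) \<in> R^^m" using reach vV by blast
    have dm: "(r,v) \<in> R^^(dist v)" unfolding dist_def using m by (rule LeastI)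
    have "dist v \<noteq> 0" proof assume "dist v = 0" with dm have "(r,v) \<in> R^^0" by metis then show False using vr by simp qed
    then obtain m' where m': "dist v = Suc m'" by (cases "dist v") auto
    with dm obtain u where u1: "(r,u) \<in> R^^m'" and u2: "(u,v) \<in> R"
      by (metis relpow_Suc_E)
    have "dist u \<le> m'" unfolding dist_def using u1 by (rule Least_le)
    then show ?thesis using u2 m' unfolding R_def by auto
  qed
  define p where "p v = (SOME u. adj E u v \<and> dist u < dist v)" for v
  have pp: "adj E (p v) v \<and> dist (p v) < dist v" if "v \<in> V" "v \<noteq> r" for v
    unfolding p_def using step[OF that] by (rule someI_ex)
  define g where "g v = {p v, v}" for v
  have inj: "inj_on g (V - {r})"
  proof (rule inj_onI)
    fix v w assume v: "v \<in> V - {r}" and w: "w \<in> V - {r}" and eq: "g v = g w"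
    show "v = w"
    proof (rule ccontr)
      assume "v \<noteq> w"
      with eq have e1: "v = p w" and e2: "w = p v" unfolding g_def by (auto simp: doubleton_eq_iff)
      have "dist (p v) < dist v" using pp[of v] v by blast
      then have a: "dist w < dist v" using e2 by metis
      have "dist (p w) < dist w" using pp[of w] w by blast
      then have b: "dist v < dist w" using e1 by metis
      show False using a b by simp
    qed
  qed
  have img: "g ` (V - {r}) \<subseteq> E" using pp unfolding g_def adj_def by auto
  have finE: "finite E"
  proof -
    have "E \<subseteq> Pow V" using G unfolding is_graph_def by auto
    moreover have "finite V" using G unfolding is_graph_def by auto
    ultimately show ?thesis by (meson finite_Pow_iff finite_subset)
  qed
  have "card (V - {r}) \<le> card E" using card_inj_on_le[OF inj img finE] .
  moreover have "card (V - {r}) = card V - 1" using r by simp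
  ultimately show ?thesis by simp
qed

lemma mod_fix: "q > 0 \<Longrightarrow> ((s::nat) + (q - s mod q) mod q) mod q = 0"
proof -
  assume q: "q > 0"
  have "(s + (q - s mod q) mod q) mod q = (s mod q + (q - s mod q)) mod q"
    by (metis mod_add_eq mod_mod_trivial)
  also have "s mod q + (q - s mod q) = q" using q by (simp add: less_imp_le)
  finally show ?thesis by simp
qed

lemma class_card:
  assumes q: "q > 0" and j: "j < q"
  shows "N div q \<le> card {x\<in>{..<(N::nat)}. x mod q = j}"
proof -
  have inj: "inj_on (\<lambda>i. q*i + j) {..<N div q}" using q by (auto simp: inj_on_def)
  have img: "(\<lambda>i. q*i + j) ` {..<N div q} \<subseteq> {x\<in>{..<N}. x mod q = j}"
  proof
    fix x assume "x \<in> (\<lambda>i. q*i + j) ` {..<N div q}"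
    then obtain i where i: "i < N div q" and x: "x = q*i + j" by auto
    have "q*(i+1) \<le> q*(N div q)" using i by (intro mult_le_mono2) simp
    also have "\<dots> \<le> N" by simp
    finally have "x < N" using x j by simp
    moreover have "x mod q = j" using x j by simp
    ultimately show "x \<in> {x\<in>{..<N}. x mod q = j}" by simp
  qed
  have "card {..<N div q} \<le> card {x\<in>{..<(N::nat)}. x mod q = j}"
    using card_inj_on_le[OF inj img] by simp
  then show ?thesis by simp
qed

lemma div_real_bound: "(q::nat) > 0 \<Longrightarrow> real N / real q - 1 \<le> real (N div q)"
proof -
  assume q: "q > 0"
  have "real N = real q * real (N div q) + real (N mod q)"
    by (metis div_mult_mod_eq of_nat_add of_nat_mult mult.commute)
  moreover have "real (N mod q) < real q" using q by simp
  ultimately have "real N < real q * (real (N div q) + 1)" by (simp add: algebra_simps)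
  then have "real N / real q < real (N div q) + 1" using q by (simp add: divide_less_eq mult.commute)
  then show ?thesis by simp
qed

lemma codeg:
  fixes N k d q :: nat and lab :: "nat \<Rightarrow> nat" and S :: "nat set"
  assumes q: "q > 1" and dk: "d < k" and Ssub: "S \<subseteq> {..<N}" and Scard: "card S = d"
    and lab: "\<And>x. x \<noteq> 0 \<Longrightarrow> lab x = x mod q"
    and N: "N \<ge> 1"
    and Edef: "E = {e. e \<subseteq> {..<N} \<and> card e = k \<and> (\<Sum>x\<in>e. lab x) mod q = 0}"
  shows "(1 / real q - real (k+1) / real N) * real ((N - d) choose (k - d)) \<le> real (hdeg E S)"
proof -
  define m where "m = k - d"
  define W where "W = {..<N} - S"
  define M where "M = N - d"
  have m1: "m \<ge> 1" using dk m_def by simp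
  have finS: "finite S" using Ssub finite_subset by blast
  have finW: "finite W" unfolding W_def by simp
  have cW: "card W = M" unfolding W_def M_def using Ssub Scard by (simp add: card_Diff_subset finS)
  show ?thesis
  proof (cases "M < m")
    case True
    then have z: "(N - d) choose (k - d) = 0" unfolding M_def m_def by (simp add: binomial_eq_0)
    show ?thesis by (simp only: z)
  next
    case False
    then have Mm: "m \<le> M" by simp
    define Rs where "Rs = {R. R \<subseteq> W \<and> card R = m - 1}"
    define j where "j R = (q - (\<Sum>x\<in>S \<union> R. lab x) mod q) mod q" for R
    define Vs where "Vs R = {v \<in> W - R. v \<noteq> 0 \<and> v mod q = j R}" for R
    define P where "P = Sigma Rs Vs"
    define h where "h p = S \<union> insert (snd p) (fst p)" for p :: "nat set \<times> nat"
    define F where "F = {e\<in>E. S \<subseteq> e}"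
    define L where "L = N div q - k"
    have finRs: "finite Rs" unfolding Rs_def using finW by simp
    have cRs: "card Rs = M choose (m - 1)" unfolding Rs_def using n_subsets[OF finW] cW by simp
    have finVs: "finite (Vs R)" for R unfolding Vs_def using finW by simp
    have finP: "finite P" unfolding P_def using finRs finVs by simp
    have cVs: "L \<le> card (Vs R)" if R: "R \<in> Rs" for R
    proof -
      have jq: "j R < q" unfolding j_def using q by simp
      have finR: "finite R" using R finW unfolding Rs_def by (auto intro: finite_subset)
      have "{x\<in>{..<N}. x mod q = j R} - (insert 0 (S \<union> R)) \<subseteq> Vs R"
        unfolding Vs_def W_def by auto
      moreover have "card (insert 0 (S \<union> R)) \<le> k"
      proof -
        have "card (insert 0 (S \<union> R)) \<le> Suc (card (S \<union> R))" by (simp add: card_insert_if finS finR)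
        also have "card (S \<union> R) \<le> card S + card R" by (rule card_Un_le)
        finally show ?thesis using R Scard m1 unfolding Rs_def m_def by simp
      qed
      moreover have "N div q - card (insert 0 (S \<union> R)) \<le> card ({x\<in>{..<N}. x mod q = j R} - (insert 0 (S \<union> R)))"
        using class_card[of q "j R" N] q jq diff_card_le_card_Diff[of "insert 0 (S \<union> R)" "{x\<in>{..<N}. x mod q = j R}"]
          finS finR by simp
      ultimately have "N div q - k \<le> card (Vs R)"
        using card_mono[OF finVs[of R]] by (meson diff_le_mono2 le_trans)
      then show ?thesis unfolding L_def .
    qed
    have cP: "card P = (\<Sum>R\<in>Rs. card (Vs R))" unfolding P_def using finRs finVs by (simp add: card_SigmaI)
    have low: "card Rs * L \<le> card P"
      unfolding cP using sum_bounded_below[of Rs L "\<lambda>R. card (Vs R)"] cVs by simp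
    have hE: "h p \<in> F" if p: "p \<in> P" for p
    proof -
      obtain R v where pe: "p = (R, v)" by (cases p)
      have R: "R \<subseteq> W" "card R = m - 1" and v: "v \<in> W" "v \<notin> R" "v \<noteq> 0" "v mod q = j R"
        using p unfolding pe P_def Rs_def Vs_def by auto
      have finR: "finite R" using R finW by (meson finite_subset)
      have disj: "S \<inter> R = {}" using R unfolding W_def by auto
      have vS: "v \<notin> S \<union> R" using v unfolding W_def by auto
      have hp: "h p = insert v (S \<union> R)" unfolding h_def pe by auto
      have sub: "h p \<subseteq> {..<N}" using R v Ssub unfolding hp W_def by auto
      have "card (h p) = Suc (card (S \<union> R))" unfolding hp using vS finS finR by simp
      also have "card (S \<union> R) = d + (m - 1)" using card_Un_disjoint[OF finS finR disj] Scard R by simp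
      finally have ck: "card (h p) = k" using m1 dk unfolding m_def by simp
      have "(\<Sum>x\<in>h p. lab x) = lab v + (\<Sum>x\<in>S \<union> R. lab x)" unfolding hp using vS finS finR by simp
      also have "lab v = j R" using lab[OF v(3)] v(4) by simp
      finally have "(\<Sum>x\<in>h p. lab x) mod q = 0" unfolding j_def using mod_fix[of q] q
        by (simp add: add.commute)
      then show ?thesis unfolding F_def Edef using sub ck hp by auto
    qed
    have finF: "finite F" unfolding F_def Edef by (rule finite_subset[of _ "Pow {..<N}"]) auto
    define fib where "fib e = {p\<in>P. h p = e}" for e
    have cfib: "card (fib e) \<le> m" if e: "e \<in> F" for e
    proof -
      have inj: "inj_on snd (fib e)"
      proof (rule inj_onI)
        fix p p' assume p: "p \<in> fib e" and p': "p' \<in> fib e" and eq: "snd p = snd p'"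
        obtain R v where pe: "p = (R, v)" by (cases p)
        obtain R' v' where pe': "p' = (R', v')" by (cases p')
        have "R \<subseteq> W" "v \<notin> R" "R' \<subseteq> W" "v' \<notin> R'" "h p = e" "h p' = e"
          using p p' unfolding pe pe' fib_def P_def Rs_def Vs_def by auto
        then have "R = e - S - {v}" "R' = e - S - {v'}" unfolding h_def pe pe' W_def by auto
        then show "p = p'" using eq pe pe' by simp
      qed
      have img: "snd ` fib e \<subseteq> e - S"
      proof
        fix v assume "v \<in> snd ` fib e"
        then obtain R where "(R, v) \<in> P" "h (R, v) = e" unfolding fib_def by force
        then show "v \<in> e - S" unfolding h_def P_def Vs_def W_def by auto
      qed
      have eS: "S \<subseteq> e" and ce: "card e = k" and fe: "finite e"
        using e unfolding F_def Edef by (auto intro: finite_subset)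
      have "card (e - S) = m" using card_Diff_subset[OF finS eS] ce Scard m_def by simp
      then show ?thesis using card_inj_on_le[OF inj img] fe by simp
    qed
    have "P \<subseteq> (\<Union>e\<in>F. fib e)" unfolding fib_def using hE by auto
    then have "card P \<le> card (\<Union>e\<in>F. fib e)"
      by (rule card_mono[rotated]) (use finF fib_def finP in auto)
    also have "\<dots> \<le> (\<Sum>e\<in>F. card (fib e))" by (rule card_UN_le[OF finF])
    also have "\<dots> \<le> (\<Sum>e\<in>F. m)" by (rule sum_mono) (rule cfib)
    finally have up: "card P \<le> m * card F" by (simp add: mult.commute)
    have hdF: "hdeg E S = card F" unfolding hdeg_def F_def by simp
    have key: "(M choose (m - 1)) * L \<le> m * hdeg E S" using low up cRs hdF by simp
    have ident: "m * (M choose m) = (M - (m - 1)) * (M choose (m - 1))"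
      using binomial_absorption[of "m - 1" M] binomial_absorb_comp[of M "m - 1"] m1 by simp
    define t where "t = 1 / real q - real (k+1) / real N"
    show ?thesis
    proof (cases "t \<le> 0")
      case True
      have "t * real ((N - d) choose (k - d)) \<le> 0" using True by (simp add: mult_nonpos_nonneg)
      also have "\<dots> \<le> real (hdeg E S)" by simp
      finally show ?thesis unfolding t_def .
    next
      case False
      then have t: "t > 0" by simp
      have "real N * t = real N / real q - real (k+1)" unfolding t_def using N by (simp add: field_simps)
      also have "\<dots> \<le> real L"
      proof -
        have "real N / real q - 1 \<le> real (N div q)" using div_real_bound q by simp
        moreover have "real (N div q) - real k \<le> real L" unfolding L_def by linarith
        ultimately show ?thesis by simp
      qed
      finally have NL: "real N * t \<le> real L" .
      have MN: "real (M - (m - 1)) \<le> real N" unfolding M_def by simp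
      have "t * real (M choose m) * real m = t * real (M - (m - 1)) * real (M choose (m - 1))"
        using arg_cong[OF ident, of real] by (simp only: of_nat_mult) (simp add: algebra_simps)
      also have "\<dots> \<le> t * real N * real (M choose (m - 1))"
        using MN t by (intro mult_right_mono mult_left_mono) auto
      also have "\<dots> \<le> real L * real (M choose (m - 1))"
        using NL by (intro mult_right_mono) (auto simp: algebra_simps)
      also have "\<dots> \<le> real m * real (hdeg E S)"
        using key by (metis mult.commute of_nat_le_iff of_nat_mult)
      finally have "t * real (M choose m) * real m \<le> real (hdeg E S) * real m" by (simp add: algebra_simps)
      then have "t * real (M choose m) \<le> real (hdeg E S)" using m1 by simp
      then show ?thesis unfolding t_def M_def m_def .
    qed
  qed
qed

lemma no_embed:
  fixes VT :: "nat set" and ET :: "nat set set" and \<phi> :: "nat + nat set \<times> nat \<Rightarrow> nat"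
    and lab :: "nat \<Rightarrow> nat" and E :: "nat set set"
  assumes q: "q > 1" and k: "k \<ge> 2" and T: "is_tree VT ET" and n: "card VT = n" "n \<ge> 1"
    and degs: "\<forall>v\<in>VT. gdeg ET v mod q = 1 mod q"
    and Ndef: "N = (k - 1) * n + 2 - k"
    and inj: "inj_on \<phi> (expansion_V k VT ET)" and img: "\<phi> ` expansion_V k VT ET \<subseteq> {..<N}"
    and edges: "\<forall>e\<in>expansion_E k ET. \<phi> ` e \<in> E"
    and Emod: "\<forall>e\<in>E. (\<Sum>x\<in>e. lab x) mod q = 0"
    and tot: "(\<Sum>x<N. lab x) mod q = 1"
  shows False
proof -
  define X where "X = expansion_V k VT ET"
  define ex where "ex e = Inl ` e \<union> {Inr (e, i) | i. i < k - 2}" for e :: "nat set"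
  define EE where "EE = expansion_E k ET"
  have EEex: "EE = ex ` ET" unfolding EE_def expansion_E_def ex_def by auto
  have G: "is_graph VT ET" and VTne: "VT \<noteq> {}" and C: "connected_graph VT ET"
    using T unfolding is_tree_def by auto
  have finVT: "finite VT" using G unfolding is_graph_def by simp
  have ETsub: "ET \<subseteq> Pow VT" using G unfolding is_graph_def by auto
  have finET: "finite ET" using ETsub finVT by (meson finite_Pow_iff finite_subset)
  have cET: "n - 1 \<le> card ET" using conn_edges[OF G VTne C] n by simp
  have Xeq: "X = Inl ` VT \<union> (\<lambda>(e,i). Inr (e,i)) ` (ET \<times> {..<k-2})"
    unfolding X_def expansion_V_def by auto
  have finX: "finite X" unfolding Xeq using finVT finET by simp
  have cX: "card X = n + card ET * (k - 2)"
  proof -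
    have d: "Inl ` VT \<inter> (\<lambda>(e,i). Inr (e,i)) ` (ET \<times> {..<k-2}) = {}" by auto
    have c1: "card (Inl ` VT :: (nat + nat set \<times> nat) set) = n" using n by (simp add: card_image)
    have i2: "inj_on (\<lambda>(e,i). (Inr (e,i) :: nat + nat set \<times> nat)) (ET \<times> {..<k-2})"
      by (auto simp: inj_on_def)
    have c2: "card ((\<lambda>(e,i). (Inr (e,i) :: nat + nat set \<times> nat)) ` (ET \<times> {..<k-2})) = card ET * (k - 2)"
      using card_image[OF i2] by (simp add: card_cartesian_product)
    show ?thesis unfolding Xeq using card_Un_disjoint[OF _ _ d] finVT finET c1 c2 by simp
  qed
  have NX: "N \<le> card X"
  proof -
    obtain k' where k': "k = k' + 2" using k by (metis add.commute le_Suc_ex)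
    obtain n' where n': "n = n' + 1" using n by (metis add.commute le_Suc_ex)
    have "N = n + (n - 1) * (k - 2)" unfolding Ndef k' n' by (simp add: algebra_simps)
    then show ?thesis using cX cET by simp
  qed
  have imgX: "\<phi> ` X = {..<N}"
  proof (rule card_subset_eq)
    show "\<phi> ` X \<subseteq> {..<N}" using img X_def by simp
    show "card (\<phi> ` X) = card {..<N}"
    proof -
      have "card (\<phi> ` X) = card X" using card_image inj X_def by auto
      moreover have "card (\<phi> ` X) \<le> N" using card_mono[OF _ \<open>\<phi> ` X \<subseteq> {..<N}\<close>] by simp
      ultimately show ?thesis using NX by simp
    qed
  qed simp
  define g where "g y = lab (\<phi> y)" for y
  have s1: "(\<Sum>x<N. lab x) = (\<Sum>y\<in>X. g y)"
    unfolding imgX[symmetric] g_def using sum.reindex[OF inj[folded X_def], of lab] by simp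
  have exX: "ex e \<subseteq> X" if "e \<in> ET" for e using that ETsub unfolding ex_def X_def expansion_V_def by blast
  have finEE: "finite EE" unfolding EEex using finET by simp
  have EEX: "ee \<subseteq> X" if "ee \<in> EE" for ee using that exX unfolding EEex by auto
  have s2: "(\<Sum>ee\<in>EE. \<Sum>y\<in>ee. g y) mod q = 0"
  proof -
    have "(\<Sum>y\<in>ee. g y) mod q = 0" if ee: "ee \<in> EE" for ee
    proof -
      have "inj_on \<phi> ee" using inj EEX[OF ee] X_def inj_on_subset by blast
      then have "(\<Sum>y\<in>ee. g y) = (\<Sum>x\<in>\<phi> ` ee. lab x)" unfolding g_def by (simp add: sum.reindex)
      moreover have "\<phi> ` ee \<in> E" using edges ee EE_def by simp
      ultimately show ?thesis using Emod by simp
    qed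
    then have "(\<Sum>ee\<in>EE. (\<Sum>y\<in>ee. g y) mod q) = 0" by simp
    then show ?thesis by (metis mod_sum_eq mod_0)
  qed
  define D where "D y = card {ee\<in>EE. y \<in> ee}" for y
  have s3: "(\<Sum>ee\<in>EE. \<Sum>y\<in>ee. g y) = (\<Sum>y\<in>X. D y * g y)"
  proof -
    have "(\<Sum>ee\<in>EE. \<Sum>y\<in>ee. g y) = (\<Sum>ee\<in>EE. \<Sum>y\<in>X. if y \<in> ee then g y else 0)"
    proof (rule sum.cong[OF refl])
      fix ee assume "ee \<in> EE"
      then have "X \<inter> ee = ee" using EEX by auto
      then show "(\<Sum>y\<in>ee. g y) = (\<Sum>y\<in>X. if y \<in> ee then g y else 0)"
        using sum.inter_restrict[OF finX, of g ee] by simp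
    qed
    also have "\<dots> = (\<Sum>y\<in>X. \<Sum>ee\<in>EE. if y \<in> ee then g y else 0)" by (rule sum.swap)
    also have "\<dots> = (\<Sum>y\<in>X. D y * g y)"
    proof (rule sum.cong[OF refl])
      fix y
      have "(\<Sum>ee\<in>EE. if y \<in> ee then g y else 0) = (\<Sum>ee\<in>EE \<inter> {ee. y \<in> ee}. g y)"
        using sum.inter_restrict[OF finEE, of "\<lambda>_. g y" "{ee. y \<in> ee}"] by simp
      also have "\<dots> = D y * g y" unfolding D_def by (simp add: Int_def conj_commute)
      finally show "(\<Sum>ee\<in>EE. if y \<in> ee then g y else 0) = D y * g y" .
    qed
    finally show ?thesis .
  qed
  have injex: "inj_on ex ET"
  proof (rule inj_onI)
    fix e e' assume "ex e = ex e'"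
    then have "{x. Inl x \<in> ex e} = {x. Inl x \<in> ex e'}" by simp
    moreover have "{x. Inl x \<in> ex e} = e" for e unfolding ex_def by auto
    ultimately show "e = e'" by simp
  qed
  have Dmod: "D y mod q = 1" if y: "y \<in> X" for y
  proof -
    have "y \<in> Inl ` VT \<or> y \<in> (\<lambda>(e,i). Inr (e,i)) ` (ET \<times> {..<k-2})" using y Xeq by auto
    then show ?thesis
    proof
      assume "y \<in> Inl ` VT"
      then obtain v where v: "v \<in> VT" and yv: "y = Inl v" by auto
      have "{ee\<in>EE. y \<in> ee} = ex ` {e\<in>ET. v \<in> e}" unfolding EEex yv ex_def by auto
      then have "D y = card {e\<in>ET. v \<in> e}" unfolding D_def
        using card_image[OF inj_on_subset[OF injex, of "{e\<in>ET. v \<in> e}"]] by auto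
      then have "D y = gdeg ET v" unfolding gdeg_def by simp
      then show ?thesis using degs v q by simp
    next
      assume "y \<in> (\<lambda>(e,i). Inr (e,i)) ` (ET \<times> {..<k-2})"
      then obtain e i where e: "e \<in> ET" "i < k - 2" and ye: "y = Inr (e,i)" by auto
      have "{ee\<in>EE. y \<in> ee} = {ex e}" unfolding EEex ye ex_def using e by auto
      then show ?thesis unfolding D_def using q by simp
    qed
  qed
  have "(\<Sum>y\<in>X. D y * g y) mod q = (\<Sum>y\<in>X. (D y * g y) mod q) mod q" by (simp add: mod_sum_eq)
  also have "\<dots> = (\<Sum>y\<in>X. g y mod q) mod q"
  proof -
    have "(D y * g y) mod q = g y mod q" if "y \<in> X" for y
      using Dmod[OF that] by (metis mod_mult_left_eq mult_1)
    then show ?thesis by simp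
  qed
  also have "\<dots> = (\<Sum>y\<in>X. g y) mod q" by (simp add: mod_sum_eq)
  finally have "(\<Sum>y\<in>X. g y) mod q = 0" using s2 s3 by simp
  then show False using tot s1 by simp
qed

theorem theorem3p4:
  fixes k d q :: nat
  assumes "k > d" and "d \<ge> 1" and "1 < q" and "q \<le> k"
  shows "\<exists>f :: nat \<Rightarrow> real. (f \<longlongrightarrow> 0) sequentially \<and>
    (\<forall>n::nat. n > 0 \<longrightarrow> (int q dvd int n - 2) \<longrightarrow>
      (let N = (k - 1) * n + 2 - k in
       \<exists>E :: nat set set. is_kgraph k {..<N} E \<and>
         real (min_codegree d {..<N} E) \<ge> (1 / real q - f N) * real ((N - d) choose (k - d)) \<and>
         \<not> (\<exists>(VT :: nat set) ET. is_tree VT ET \<and> card VT = n \<and>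
                (\<forall>v\<in>VT. gdeg ET v mod q = 1 mod q) \<and>
                hcontains (expansion_V k VT ET) (expansion_E k ET) {..<N} E)))"
proof (intro exI conjI allI impI)
  show "((\<lambda>N. real (k+1) / real N) \<longlongrightarrow> 0) sequentially" by (rule lim_const_over_n)
  fix n :: nat
  assume n0: "n > 0" and "int q dvd int n - 2"
  define N where "N = (k - 1) * n + 2 - k"
  have k2: "k \<ge> 2" using assms by simp
  have N1: "N \<ge> 1"
  proof -
    have "(k - 1) * n \<ge> k - 1" using n0 by simp
    then show ?thesis unfolding N_def using k2 by linarith
  qed
  define s where "s = (\<Sum>x\<in>{1..<N}. x mod q)"
  define lab where "lab x = (if x = 0 then (q - 1) * s + 1 else x mod q)" for x
  define E where "E = {e. e \<subseteq> {..<N} \<and> card e = k \<and> (\<Sum>x\<in>e. lab x) mod q = 0}"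
  have labnz: "\<And>x. x \<noteq> 0 \<Longrightarrow> lab x = x mod q" unfolding lab_def by simp
  have tot: "(\<Sum>x<N. lab x) mod q = 1"
  proof -
    have U: "{..<N} = insert 0 {1..<N}" using N1 by auto
    have "(\<Sum>x\<in>{1..<N}. lab x) = s" unfolding s_def by (rule sum.cong) (auto simp: lab_def)
    then have "(\<Sum>x<N. lab x) = (q - 1) * s + 1 + s" unfolding U by (simp add: lab_def)
    also have "\<dots> = q * s + 1" using assms(3) by (simp add: algebra_simps)
    finally show ?thesis using assms(3) by (simp add: Suc_times_mod_eq)
  qed
  have kg: "is_kgraph k {..<N} E" unfolding is_kgraph_def E_def by auto
  have cod: "(1 / real q - real (k+1) / real N) * real ((N - d) choose (k - d)) \<le> real (min_codegree d {..<N} E)"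
  proof (cases "{hdeg E S | S. S \<subseteq> {..<N} \<and> card S = d} = {}")
    case True
    have "\<not> d \<le> N"
    proof
      assume "d \<le> N"
      then have "hdeg E {..<d} \<in> {hdeg E S | S. S \<subseteq> {..<N} \<and> card S = d}" by auto
      then show False using True by simp
    qed
    then have z: "(N - d) choose (k - d) = 0" using assms(1) by (simp add: binomial_eq_0)
    show ?thesis by (simp only: z)
  next
    case False
    have fin: "finite {hdeg E S | S. S \<subseteq> {..<N} \<and> card S = d}"
    proof -
      have "{hdeg E S | S. S \<subseteq> {..<N} \<and> card S = d} \<subseteq> hdeg E ` Pow {..<N}" by auto
      then show ?thesis by (rule finite_subset) simp
    qed
    have "min_codegree d {..<N} E \<in> {hdeg E S | S. S \<subseteq> {..<N} \<and> card S = d}"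
      unfolding min_codegree_def using Min_in[OF fin False] .
    then obtain S where S: "S \<subseteq> {..<N}" "card S = d" and eq: "min_codegree d {..<N} E = hdeg E S" by auto
    show ?thesis unfolding eq
      by (rule codeg[OF assms(3) assms(1) S labnz N1 E_def])
  qed
  have notree: "\<not> (\<exists>(VT :: nat set) ET. is_tree VT ET \<and> card VT = n \<and>
                (\<forall>v\<in>VT. gdeg ET v mod q = 1 mod q) \<and>
                hcontains (expansion_V k VT ET) (expansion_E k ET) {..<N} E)"
  proof
    assume "\<exists>(VT :: nat set) ET. is_tree VT ET \<and> card VT = n \<and>
                (\<forall>v\<in>VT. gdeg ET v mod q = 1 mod q) \<and>
                hcontains (expansion_V k VT ET) (expansion_E k ET) {..<N} E"
    then obtain VT :: "nat set" and ET where T: "is_tree VT ET" and c: "card VT = n"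
      and dg: "\<forall>v\<in>VT. gdeg ET v mod q = 1 mod q"
      and hc: "hcontains (expansion_V k VT ET) (expansion_E k ET) {..<N} E" by blast
    from hc obtain \<phi> where i: "inj_on \<phi> (expansion_V k VT ET)" and im: "\<phi> ` expansion_V k VT ET \<subseteq> {..<N}"
      and ed: "\<forall>e\<in>expansion_E k ET. \<phi> ` e \<in> E"
      unfolding hcontains_def by blast
    have Em: "\<forall>e\<in>E. (\<Sum>x\<in>e. lab x) mod q = 0" unfolding E_def by simp
    show False
      by (rule no_embed[OF assms(3) k2 T c _ dg N_def i im ed Em tot]) (use n0 in simp)
  qed
  show "let N = (k - 1) * n + 2 - k in
       \<exists>E :: nat set set. is_kgraph k {..<N} E \<and>
         real (min_codegree d {..<N} E) \<ge> (1 / real q - real (k+1) / real N) * real ((N - d) choose (k - d)) \<and>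
         \<not> (\<exists>(VT :: nat set) ET. is_tree VT ET \<and> card VT = n \<and>
                (\<forall>v\<in>VT. gdeg ET v mod q = 1 mod q) \<and>
                hcontains (expansion_V k VT ET) (expansion_E k ET) {..<N} E)"
    unfolding Let_def N_def[symmetric] using kg cod notree by (intro exI[of _ E] conjI)
qed

end
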